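(* Let $n\ge 3$ and let $\beta\in B_n(D)$ be such that $\pi(\beta)$ is a transposition. Then the subgroup $H_\beta=\langle P_n(D),\beta\rangle$ of $B_n(D)$ is not bi-orderable.
   Context: $B_n(D)$ is the Artin braid group on $n$ strands, with generators $\sigma_1,\dots,\sigma_{n-1}$ and relations $\sigma_i\sigma_j=\sigma_j\sigma_i$ for $|i-j|\ge 2$ and $\sigma_i\sigma_{i+1}\sigma_i=\sigma_{i+1}\sigma_i\sigma_{i+1}$. The permutation homomorphism $\pi: B_n(D)\to S_n$ is given by $\pi(\sigma_i)=(i,i+1)$, and $P_n(D)=\ker\pi$. $H_\beta=\langle P_n(D),\beta\rangle$ is the subgroup generated by $P_n(D)$ and $\beta$. A group is bi-orderable if it admits a strict total ordering invariant under both left and right multiplication. *)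

theory Defs
  imports "HOL-Algebra.Generated_Groups" "HOL-Combinatorics.Transposition"
begin

text \<open>Braid words: a letter (i, True) stands for sigma_i, (i, False) for sigma_i inverse.
  A word is valid for B_n if all indices lie in 1..n-1.\<close>

type_synonym bword = "(nat \<times> bool) list"

definition valid_word :: "nat \<Rightarrow> bword \<Rightarrow> bool" where
  "valid_word n w \<longleftrightarrow> (\<forall>(i,b)\<in>set w. 1 \<le> i \<and> i \<le> n - 1)"

inductive beq :: "nat \<Rightarrow> bword \<Rightarrow> bword \<Rightarrow> bool" for n where
  beq_refl: "beq n w w"
| beq_sym: "beq n u v \<Longrightarrow> beq n v u"
| beq_trans: "beq n u v \<Longrightarrow> beq n v w \<Longrightarrow> beq n u w"
| beq_ctxt: "beq n u v \<Longrightarrow> valid_word n a \<Longrightarrow> valid_word n c \<Longrightarrow> beq n (a @ u @ c) (a @ v @ c)"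
| beq_cancel: "1 \<le> i \<Longrightarrow> i \<le> n - 1 \<Longrightarrow> beq n [(i, b), (i, \<not> b)] []"
| beq_comm: "1 \<le> i \<Longrightarrow> i \<le> n - 1 \<Longrightarrow> 1 \<le> j \<Longrightarrow> j \<le> n - 1 \<Longrightarrow> i + 2 \<le> j \<Longrightarrow>
     beq n [(i, True), (j, True)] [(j, True), (i, True)]"
| beq_braid: "1 \<le> i \<Longrightarrow> i + 1 \<le> n - 1 \<Longrightarrow>
     beq n [(i, True), (i+1, True), (i, True)] [(i+1, True), (i, True), (i+1, True)]"

definition braid_rel :: "nat \<Rightarrow> (bword \<times> bword) set" where
  "braid_rel n = {(u, v). valid_word n u \<and> valid_word n v \<and> beq n u v}"

definition braid_group :: "nat \<Rightarrow> bword set monoid" where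
  "braid_group n = \<lparr> carrier = {w. valid_word n w} // braid_rel n,
     mult = (\<lambda>X Y. braid_rel n `` {(SOME x. x \<in> X) @ (SOME y. y \<in> Y)}),
     one = braid_rel n `` {[]} \<rparr>"

fun word_perm :: "bword \<Rightarrow> nat \<Rightarrow> nat" where
  "word_perm [] = id"
| "word_perm ((i, b) # w) = transpose i (i + 1) \<circ> word_perm w"

definition braid_perm :: "bword set \<Rightarrow> nat \<Rightarrow> nat" where
  "braid_perm X = word_perm (SOME x. x \<in> X)"

definition pure_braids :: "nat \<Rightarrow> bword set set" where
  "pure_braids n = {X \<in> carrier (braid_group n). braid_perm X = id}"

definition is_transposition :: "nat \<Rightarrow> (nat \<Rightarrow> nat) \<Rightarrow> bool" where
  "is_transposition n p \<longleftrightarrow> (\<exists>i j. i \<in> {1..n} \<and> j \<in> {1..n} \<and> i \<noteq> j \<and> p = transpose i j)"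

definition bi_orderable :: "('a, 'b) monoid_scheme \<Rightarrow> bool" where
  "bi_orderable G \<longleftrightarrow> (\<exists>r :: 'a \<Rightarrow> 'a \<Rightarrow> bool.
     (\<forall>x\<in>carrier G. \<not> r x x) \<and>
     (\<forall>x\<in>carrier G. \<forall>y\<in>carrier G. \<forall>z\<in>carrier G. r x y \<and> r y z \<longrightarrow> r x z) \<and>
     (\<forall>x\<in>carrier G. \<forall>y\<in>carrier G. x \<noteq> y \<longrightarrow> r x y \<or> r y x) \<and>
     (\<forall>x\<in>carrier G. \<forall>y\<in>carrier G. \<forall>z\<in>carrier G.
         r x y \<longrightarrow> r (z \<otimes>\<^bsub>G\<^esub> x) (z \<otimes>\<^bsub>G\<^esub> y) \<and> r (x \<otimes>\<^bsub>G\<^esub> z) (y \<otimes>\<^bsub>G\<^esub> z)))"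

end

theory Submission
  imports Defs
begin

definition lkL :: "nat \<Rightarrow> bool \<Rightarrow> nat \<Rightarrow> nat \<Rightarrow> int" where
  "lkL i e a b = (if (a = i \<and> b = i+1) \<or> (a = i+1 \<and> b = i) then (if e then 1 else -1) else 0)"

fun lk :: "bword \<Rightarrow> nat \<Rightarrow> nat \<Rightarrow> int" where
  "lk [] a b = 0"
| "lk ((i,e)#w) a b = lk w a b + lkL i e (word_perm w a) (word_perm w b)"

fun winv :: "bword \<Rightarrow> bword" where
  "winv [] = []"
| "winv ((i,e)#w) = winv w @ [(i, \<not> e)]"

lemma word_perm_append: "word_perm (u@v) = word_perm u \<circ> word_perm v"
  by (induction u rule: word_perm.induct) auto

lemma lk_append: "lk (u@v) a b = lk v a b + lk u (word_perm v a) (word_perm v b)"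
  by (induction u arbitrary: a b rule: word_perm.induct) (auto simp: word_perm_append)

lemma valid_append[simp]: "valid_word n (u@v) \<longleftrightarrow> valid_word n u \<and> valid_word n v"
  unfolding valid_word_def by auto

lemma valid_Cons[simp]: "valid_word n ((i,e)#w) \<longleftrightarrow> 1 \<le> i \<and> i \<le> n - 1 \<and> valid_word n w"
  unfolding valid_word_def by auto

lemma valid_Nil[simp]: "valid_word n []"
  unfolding valid_word_def by auto

lemma valid_winv[simp]: "valid_word n (winv w) \<longleftrightarrow> valid_word n w"
  by (induction w rule: winv.induct) auto

lemma beq_inv: "beq n u v \<Longrightarrow> word_perm u = word_perm v \<and> lk u = lk v"
proof (induction rule: beq.induct)
  case (beq_ctxt u v a c)
  then show ?case by (auto simp: word_perm_append lk_append fun_eq_iff)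
next
  case (beq_cancel i b)
  then show ?case by (auto simp: fun_eq_iff lkL_def transpose_def)
next
  case (beq_comm i j)
  then show ?case by (auto simp: fun_eq_iff lkL_def transpose_def)
next
  case (beq_braid i)
  then show ?case by (auto simp: fun_eq_iff lkL_def transpose_def)
qed auto

lemma beq_at: "beq n u v \<Longrightarrow> valid_word n a \<Longrightarrow> valid_word n c \<Longrightarrow> x = a@u@c \<Longrightarrow> y = a@v@c \<Longrightarrow> beq n x y"
  using beq_ctxt by blast

lemma beq_app: "beq n u u' \<Longrightarrow> beq n v v' \<Longrightarrow> valid_word n u' \<Longrightarrow> valid_word n v \<Longrightarrow> beq n (u@v) (u'@v')"
proof -
  assume h: "beq n u u'" "beq n v v'" "valid_word n u'" "valid_word n v"
  have "beq n (u@v) (u'@v)" by (rule beq_at[OF h(1), of "[]" v]) (use h in auto)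
  moreover have "beq n (u'@v) (u'@v')" by (rule beq_at[OF h(2), of u' "[]"]) (use h in auto)
  ultimately show ?thesis by (rule beq_trans)
qed

lemma beq_winv_right: "valid_word n w \<Longrightarrow> beq n (w @ winv w) []"
proof (induction w rule: winv.induct)
  case (2 i e w)
  then have "beq n ([(i,e)] @ (w @ winv w) @ [(i, \<not> e)]) ([(i,e)] @ [] @ [(i, \<not> e)])"
    by (intro beq_ctxt) auto
  moreover have "beq n [(i,e),(i,\<not>e)] []" using 2 by (intro beq_cancel) auto
  ultimately show ?case by (auto intro: beq_trans)
qed (auto intro: beq_refl)

lemma beq_winv_left: "valid_word n w \<Longrightarrow> beq n (winv w @ w) []"
proof (induction w rule: winv.induct)
  case (2 i e w)
  have "beq n [(i,\<not>e),(i,\<not>\<not>e)] []" using 2 by (intro beq_cancel) auto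
  then have "beq n (winv w @ [(i,\<not>e),(i,e)] @ w) (winv w @ [] @ w)"
    using 2 by (intro beq_ctxt) auto
  then show ?case using 2 by (auto intro: beq_trans)
qed (auto intro: beq_refl)

definition cls :: "nat \<Rightarrow> bword \<Rightarrow> bword set" where
  "cls n w = braid_rel n `` {w}"

lemma in_cls: "x \<in> cls n w \<longleftrightarrow> valid_word n w \<and> valid_word n x \<and> beq n w x"
  unfolding cls_def braid_rel_def by auto

lemma cls_eq: "beq n u v \<Longrightarrow> valid_word n u \<Longrightarrow> valid_word n v \<Longrightarrow> cls n u = cls n v"
proof -
  assume h: "beq n u v" "valid_word n u" "valid_word n v"
  have "x \<in> cls n u \<longleftrightarrow> x \<in> cls n v" for x
  proof
    assume "x \<in> cls n u"
    then have "beq n u x" "valid_word n x" by (auto simp: in_cls)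
    then show "x \<in> cls n v" using h by (simp add: in_cls) (metis beq_sym beq_trans)
  next
    assume "x \<in> cls n v"
    then have "beq n v x" "valid_word n x" by (auto simp: in_cls)
    then show "x \<in> cls n u" using h by (simp add: in_cls) (metis beq_trans)
  qed
  then show ?thesis by blast
qed

lemma cls_eqD: "cls n u = cls n v \<Longrightarrow> valid_word n u \<Longrightarrow> valid_word n v \<Longrightarrow> beq n u v"
proof -
  assume h: "cls n u = cls n v" "valid_word n u" "valid_word n v"
  have "u \<in> cls n u" using h(2) by (simp add: in_cls beq_refl)
  then have "u \<in> cls n v" using h(1) by simp
  then show ?thesis by (simp add: in_cls) (metis beq_sym)
qed

lemma cls_carrier: "valid_word n w \<Longrightarrow> cls n w \<in> carrier (braid_group n)"
  unfolding braid_group_def cls_def by (auto intro: quotientI)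

lemma carrier_cls: "X \<in> carrier (braid_group n) \<Longrightarrow> \<exists>w. valid_word n w \<and> X = cls n w"
  unfolding braid_group_def cls_def by (auto elim: quotientE)

lemma some_cls: "valid_word n w \<Longrightarrow> valid_word n (SOME x. x \<in> cls n w) \<and> beq n w (SOME x. x \<in> cls n w)"
proof -
  assume v: "valid_word n w"
  have "w \<in> cls n w" using v by (simp add: in_cls beq_refl)
  then have "(SOME x. x \<in> cls n w) \<in> cls n w" by (rule someI)
  then show ?thesis by (subst (asm) in_cls) blast
qed

lemma cls_mult: "valid_word n u \<Longrightarrow> valid_word n v \<Longrightarrow> cls n u \<otimes>\<^bsub>braid_group n\<^esub> cls n v = cls n (u@v)"
proof -
  assume u: "valid_word n u" and v: "valid_word n v"
  have "cls n u \<otimes>\<^bsub>braid_group n\<^esub> cls n v = cls n ((SOME x. x \<in> cls n u) @ (SOME y. y \<in> cls n v))"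
    unfolding braid_group_def by (simp add: cls_def)
  also have "\<dots> = cls n (u@v)"
  proof (rule cls_eq)
    show "beq n ((SOME x. x \<in> cls n u) @ (SOME y. y \<in> cls n v)) (u@v)"
      using some_cls[OF u] some_cls[OF v] u v by (intro beq_app) (auto intro: beq_sym)
  qed (use some_cls[OF u] some_cls[OF v] u v in auto)
  finally show ?thesis .
qed

lemma braid_perm_cls: "valid_word n w \<Longrightarrow> braid_perm (cls n w) = word_perm w"
proof -
  assume "valid_word n w"
  then have "beq n w (SOME x. x \<in> cls n w)" using some_cls by blast
  then show ?thesis unfolding braid_perm_def using beq_inv by metis
qed

lemma no_biorder:
  assumes bo: "bi_orderable K"
    and c: "x \<in> carrier K" "y \<in> carrier K" "x \<otimes>\<^bsub>K\<^esub> y \<in> carrier K" "y \<otimes>\<^bsub>K\<^esub> x \<in> carrier K"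
      "x \<otimes>\<^bsub>K\<^esub> (x \<otimes>\<^bsub>K\<^esub> y) \<in> carrier K" "x \<otimes>\<^bsub>K\<^esub> (y \<otimes>\<^bsub>K\<^esub> x) \<in> carrier K"
      "(y \<otimes>\<^bsub>K\<^esub> x) \<otimes>\<^bsub>K\<^esub> x \<in> carrier K"
    and e1: "x \<otimes>\<^bsub>K\<^esub> (x \<otimes>\<^bsub>K\<^esub> y) = (y \<otimes>\<^bsub>K\<^esub> x) \<otimes>\<^bsub>K\<^esub> x"
    and e2: "(x \<otimes>\<^bsub>K\<^esub> y) \<otimes>\<^bsub>K\<^esub> x = x \<otimes>\<^bsub>K\<^esub> (y \<otimes>\<^bsub>K\<^esub> x)"
    and ne: "x \<otimes>\<^bsub>K\<^esub> y \<noteq> y \<otimes>\<^bsub>K\<^esub> x"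
  shows False
proof -
  obtain r where irr: "\<forall>x\<in>carrier K. \<not> r x x"
    and tr: "\<forall>x\<in>carrier K. \<forall>y\<in>carrier K. \<forall>z\<in>carrier K. r x y \<and> r y z \<longrightarrow> r x z"
    and tot: "\<forall>x\<in>carrier K. \<forall>y\<in>carrier K. x \<noteq> y \<longrightarrow> r x y \<or> r y x"
    and inv: "\<forall>x\<in>carrier K. \<forall>y\<in>carrier K. \<forall>z\<in>carrier K.
         r x y \<longrightarrow> r (z \<otimes>\<^bsub>K\<^esub> x) (z \<otimes>\<^bsub>K\<^esub> y) \<and> r (x \<otimes>\<^bsub>K\<^esub> z) (y \<otimes>\<^bsub>K\<^esub> z)"
    using bo unfolding bi_orderable_def by blast
  have "r (x \<otimes>\<^bsub>K\<^esub> y) (y \<otimes>\<^bsub>K\<^esub> x) \<or> r (y \<otimes>\<^bsub>K\<^esub> x) (x \<otimes>\<^bsub>K\<^esub> y)"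
    using tot c ne by blast
  then show False
  proof
    assume h: "r (x \<otimes>\<^bsub>K\<^esub> y) (y \<otimes>\<^bsub>K\<^esub> x)"
    have 1: "r (x \<otimes>\<^bsub>K\<^esub> (x \<otimes>\<^bsub>K\<^esub> y)) (x \<otimes>\<^bsub>K\<^esub> (y \<otimes>\<^bsub>K\<^esub> x))" using inv c h by blast
    have 2: "r ((x \<otimes>\<^bsub>K\<^esub> y) \<otimes>\<^bsub>K\<^esub> x) ((y \<otimes>\<^bsub>K\<^esub> x) \<otimes>\<^bsub>K\<^esub> x)" using inv c h by blast
    have "r (x \<otimes>\<^bsub>K\<^esub> (x \<otimes>\<^bsub>K\<^esub> y)) ((y \<otimes>\<^bsub>K\<^esub> x) \<otimes>\<^bsub>K\<^esub> x)"
      using tr c 1 2 e2 by metis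
    then show False using irr c e1 by metis
  next
    assume h: "r (y \<otimes>\<^bsub>K\<^esub> x) (x \<otimes>\<^bsub>K\<^esub> y)"
    have 1: "r (x \<otimes>\<^bsub>K\<^esub> (y \<otimes>\<^bsub>K\<^esub> x)) (x \<otimes>\<^bsub>K\<^esub> (x \<otimes>\<^bsub>K\<^esub> y))" using inv c h by blast
    have 2: "r ((y \<otimes>\<^bsub>K\<^esub> x) \<otimes>\<^bsub>K\<^esub> x) ((x \<otimes>\<^bsub>K\<^esub> y) \<otimes>\<^bsub>K\<^esub> x)" using inv c h by blast
    have "r ((y \<otimes>\<^bsub>K\<^esub> x) \<otimes>\<^bsub>K\<^esub> x) (x \<otimes>\<^bsub>K\<^esub> (x \<otimes>\<^bsub>K\<^esub> y))"
      using tr c 1 2 e2 by metis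
    then show False using irr c e1 by metis
  qed
qed

lemma conj_transpose:
  assumes "f \<circ> g = id" "g \<circ> f = id"
  shows "f \<circ> transpose a b \<circ> g = transpose (f a) (f b)"
proof
  fix x
  have fg: "f (g x) = x" for x using assms(1) by (metis comp_apply id_apply)
  have gf: "g (f x) = x" for x using assms(2) by (metis comp_apply id_apply)
  show "(f \<circ> transpose a b \<circ> g) x = transpose (f a) (f b) x"
    unfolding transpose_def using fg gf by auto
qed

lemma perm_winv:
  assumes "valid_word n g"
  shows "word_perm g \<circ> word_perm (winv g) = id" "word_perm (winv g) \<circ> word_perm g = id"
  using beq_inv[OF beq_winv_right[OF assms]] beq_inv[OF beq_winv_left[OF assms]]
  by (simp_all add: word_perm_append)

lemma conj_mult:
  assumes "valid_word n g" "valid_word n u" "valid_word n v"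
  shows "cls n (g@u@winv g) \<otimes>\<^bsub>braid_group n\<^esub> cls n (g@v@winv g) = cls n (g@(u@v)@winv g)"
proof -
  have "beq n ((g@u)@(winv g@g)@(v@winv g)) ((g@u)@[]@(v@winv g))"
    using assms by (intro beq_ctxt beq_winv_left) auto
  then have "cls n (g@u@winv g @ g@v@winv g) = cls n (g@u@v@winv g)"
    using assms by (intro cls_eq) auto
  then show ?thesis using assms by (simp add: cls_mult)
qed

lemma braid_ident:
  assumes k: "1 \<le> k" "k + 1 \<le> n - 1"
  defines "P \<equiv> (k, True)" and "Q \<equiv> (k+1, True)"
  shows "beq n ([P,Q,Q]@[P,Q,Q]@[Q,Q]) ([Q,Q]@[P,Q,Q]@[P,Q,Q])"
proof -
  have br: "beq n [P,Q,P] [Q,P,Q]" unfolding P_def Q_def using k by (intro beq_braid) auto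
  have brs: "beq n [Q,P,Q] [P,Q,P]" using br by (rule beq_sym)
  have vP: "valid_word n [P]" "valid_word n [Q]" using k unfolding P_def Q_def by auto
  have vs: "valid_word n (P#l) \<longleftrightarrow> valid_word n l" "valid_word n (Q#l) \<longleftrightarrow> valid_word n l" for l
    using k unfolding P_def Q_def by auto
  have a1: "beq n [P,Q,Q,P,Q,Q] [P,Q,P,Q,P,Q]"
    by (rule beq_at[OF brs, of "[P,Q]" "[Q]"]) (auto simp: vs)
  have c1: "beq n [P,Q,P,Q,P,Q,Q] [Q,P,Q,P,Q,P,Q]"
  proof -
    have "beq n [P,Q,P,Q,P,Q,Q] [P,Q,P,P,Q,P,Q]"
      by (rule beq_at[OF brs, of "[P,Q,P]" "[Q]"]) (auto simp: vs)
    moreover have "beq n [P,Q,P,P,Q,P,Q] [Q,P,Q,P,Q,P,Q]"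
      by (rule beq_at[OF br, of "[]" "[P,Q,P,Q]"]) (auto simp: vs)
    ultimately show ?thesis by (rule beq_trans)
  qed
  have s1: "beq n [P,Q,Q,P,Q,Q,Q,Q] [P,Q,P,Q,P,Q,Q,Q]"
    by (rule beq_at[OF a1, of "[]" "[Q,Q]"]) (auto simp: vs)
  have s2: "beq n [P,Q,P,Q,P,Q,Q,Q] [Q,P,Q,P,Q,P,Q,Q]"
    by (rule beq_at[OF c1, of "[]" "[Q]"]) (auto simp: vs)
  have s3: "beq n [Q,P,Q,P,Q,P,Q,Q] [Q,Q,P,Q,P,Q,P,Q]"
    by (rule beq_at[OF c1, of "[Q]" "[]"]) (auto simp: vs)
  have s4: "beq n [Q,Q,P,Q,P,Q,P,Q] [Q,Q,P,Q,Q,P,Q,Q]"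
    by (rule beq_at[OF beq_sym[OF a1], of "[Q,Q]" "[]"]) (auto simp: vs)
  show ?thesis using s1 s2 s3 s4 by simp (meson beq_trans)
qed

lemma lk_differ:
  "lk ([(k,True),(k+1,True),(k+1,True)] @ [(k+1,True),(k+1,True)]) (k+1) (k+2) \<noteq>
   lk ([(k+1,True),(k+1,True)] @ [(k,True),(k+1,True),(k+1,True)]) (k+1) (k+2)"
  by (simp add: lkL_def)

lemma core:
  assumes beta: "\<beta> \<in> carrier (braid_group n)" and vg: "valid_word n g"
    and k: "1 \<le> k" "k + 1 \<le> n - 1"
    and bp: "braid_perm \<beta> = transpose (word_perm g k) (word_perm g (k+1))"
  shows "\<not> bi_orderable ((braid_group n)\<lparr>carrier := generate (braid_group n) (pure_braids n \<union> {\<beta>})\<rparr>)"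
proof
  assume bo: "bi_orderable ((braid_group n)\<lparr>carrier := generate (braid_group n) (pure_braids n \<union> {\<beta>})\<rparr>)"
  define G where "G = braid_group n"
  define S where "S = generate G (pure_braids n \<union> {\<beta>})"
  define c :: bword where "c = [(k,True),(k+1,True),(k+1,True)]"
  define d :: bword where "d = [(k+1,True),(k+1,True)]"
  define X where "X = g @ c @ winv g"
  define Y where "Y = g @ d @ winv g"
  have vc: "valid_word n c" and vd: "valid_word n d" using k unfolding c_def d_def by auto
  have vX: "valid_word n X" and vY: "valid_word n Y" using vc vd vg unfolding X_def Y_def by auto
  have pc: "word_perm c = transpose k (k+1)" unfolding c_def by (simp add: fun_eq_iff)
  have pd: "word_perm d = id" unfolding d_def by (simp add: fun_eq_iff)
  have pX: "word_perm X = transpose (word_perm g k) (word_perm g (k+1))"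
    unfolding X_def word_perm_append pc using perm_winv[OF vg]
    by (simp add: conj_transpose o_assoc)
  have pY: "word_perm Y = id"
    unfolding Y_def word_perm_append pd using perm_winv[OF vg] by simp
  obtain b where vb: "valid_word n b" and bcl: "\<beta> = cls n b" using carrier_cls[OF beta] by blast
  have pb: "word_perm b = word_perm X" using bp pX bcl braid_perm_cls[OF vb] by simp
  define z where "z = cls n (winv b @ X)"
  have zpure: "z \<in> pure_braids n"
    unfolding pure_braids_def z_def using vb vX
    by (simp add: cls_carrier braid_perm_cls word_perm_append flip: pb perm_winv(2)[OF vb])
  have "\<beta> \<otimes>\<^bsub>G\<^esub> z = cls n (b @ winv b @ X)" unfolding G_def bcl z_def using vb vX by (simp add: cls_mult)
  also have "\<dots> = cls n X"
  proof (rule cls_eq)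
    show "beq n (b @ winv b @ X) X"
      using beq_at[OF beq_winv_right[OF vb], of "[]" X] vb vX by simp
  qed (use vb vX in auto)
  finally have xz: "cls n X = \<beta> \<otimes>\<^bsub>G\<^esub> z" by simp
  have xS: "cls n X \<in> S" unfolding xz S_def using zpure by (intro generate.eng generate.incl) auto
  have yS: "cls n Y \<in> S" unfolding S_def using vY pY
    by (intro generate.incl) (simp add: pure_braids_def cls_carrier braid_perm_cls)
  have m: "cls n (g@u@winv g) \<otimes>\<^bsub>G\<^esub> cls n (g@v@winv g) = cls n (g@(u@v)@winv g)"
    if "valid_word n u" "valid_word n v" for u v
    unfolding G_def using conj_mult[OF vg that] .
  have e1: "cls n (g@(c@(c@d))@winv g) = cls n (g@((d@c)@c)@winv g)"
  proof (rule cls_eq)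
    show "beq n (g@(c@(c@d))@winv g) (g@((d@c)@c)@winv g)"
      using beq_at[OF braid_ident[OF k], of g "winv g"] vg unfolding c_def d_def by simp
  qed (use vg vc vd in auto)
  have ne: "cls n (g@(c@d)@winv g) \<noteq> cls n (g@(d@c)@winv g)"
  proof
    assume "cls n (g@(c@d)@winv g) = cls n (g@(d@c)@winv g)"
    then have h: "beq n (g@(c@d)@winv g) (g@(d@c)@winv g)" using vg vc vd by (intro cls_eqD) auto
    have cancel: "beq n (winv g @ (g@u@winv g) @ g) u" if "valid_word n u" for u
    proof -
      have "beq n (winv g @ g @ u @ winv g @ g) ([] @ u @ winv g @ g)"
        using beq_at[OF beq_winv_left[OF vg], of "[]" "u @ winv g @ g"] vg that by simp
      moreover have "beq n (u @ winv g @ g) (u @ [] @ [])"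
        using beq_at[OF beq_winv_left[OF vg], of u "[]"] vg that by simp
      ultimately show ?thesis by (auto intro: beq_trans)
    qed
    have "beq n (winv g @ (g@(c@d)@winv g) @ g) (winv g @ (g@(d@c)@winv g) @ g)"
      using beq_ctxt[OF h, of "winv g" g] vg by simp
    then have "beq n (c@d) (d@c)"
      using cancel[of "c@d"] cancel[of "d@c"] vc vd by (meson beq_sym beq_trans valid_append)
    then have "lk (c@d) = lk (d@c)" using beq_inv by blast
    then show False using lk_differ[of k] unfolding c_def d_def by metis
  qed
  let ?K = "(braid_group n)\<lparr>carrier := generate (braid_group n) (pure_braids n \<union> {\<beta>})\<rparr>"
  have cK: "carrier ?K = S" unfolding S_def G_def by simp
  have mK: "a \<otimes>\<^bsub>?K\<^esub> b' = a \<otimes>\<^bsub>G\<^esub> b'" for a b' unfolding G_def by simp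
  have vcc: "valid_word n (c@d)" "valid_word n (d@c)" "valid_word n (c@c@d)" "valid_word n (d@c@c)"
    "valid_word n (c@d@c)" using vc vd by auto
  have xy: "cls n X \<otimes>\<^bsub>G\<^esub> cls n Y = cls n (g@(c@d)@winv g)"
    unfolding X_def Y_def by (rule m[OF vc vd])
  have yx: "cls n Y \<otimes>\<^bsub>G\<^esub> cls n X = cls n (g@(d@c)@winv g)"
    unfolding X_def Y_def by (rule m[OF vd vc])
  have xxy: "cls n X \<otimes>\<^bsub>G\<^esub> (cls n X \<otimes>\<^bsub>G\<^esub> cls n Y) = cls n (g@(c@(c@d))@winv g)"
    unfolding xy unfolding X_def by (rule m[OF vc vcc(1)])
  have yxx: "(cls n Y \<otimes>\<^bsub>G\<^esub> cls n X) \<otimes>\<^bsub>G\<^esub> cls n X = cls n (g@((d@c)@c)@winv g)"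
    unfolding yx unfolding X_def by (rule m[OF vcc(2) vc])
  have xyx1: "(cls n X \<otimes>\<^bsub>G\<^esub> cls n Y) \<otimes>\<^bsub>G\<^esub> cls n X = cls n (g@((c@d)@c)@winv g)"
    unfolding xy unfolding X_def by (rule m[OF vcc(1) vc])
  have xyx2: "cls n X \<otimes>\<^bsub>G\<^esub> (cls n Y \<otimes>\<^bsub>G\<^esub> cls n X) = cls n (g@(c@(d@c))@winv g)"
    unfolding yx unfolding X_def by (rule m[OF vc vcc(2)])
  have SxS: "a \<otimes>\<^bsub>G\<^esub> b' \<in> S" if "a \<in> S" "b' \<in> S" for a b'
    using that unfolding S_def by (rule generate.eng)
  show False
    apply (rule no_biorder[OF bo, of "cls n X" "cls n Y"])
    unfolding cK mK
    apply (rule xS) apply (rule yS) apply (rule SxS[OF xS yS]) apply (rule SxS[OF yS xS])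
    apply (rule SxS[OF xS SxS[OF xS yS]]) apply (rule SxS[OF xS SxS[OF yS xS]])
    apply (rule SxS[OF SxS[OF yS xS] xS])
    using e1 xxy yxx apply simp
    using xyx1 xyx2 apply simp
    using ne xy yx apply simp
    done
qed

fun chain :: "nat \<Rightarrow> nat \<Rightarrow> bword" where
  "chain i 0 = []"
| "chain i (Suc m) = (i+m+1, True) # chain i m"

lemma chain_perm: "word_perm (chain i m) i = i \<and> word_perm (chain i m) (i+1) = i+1+m"
  by (induction m) auto

lemma chain_valid: "1 \<le> i \<Longrightarrow> i + m \<le> n - 1 \<Longrightarrow> valid_word n (chain i m)"
  by (induction m) auto

lemma core2:
  assumes n: "n \<ge> 3" and beta: "\<beta> \<in> carrier (braid_group n)"
    and ab: "1 \<le> a" "a < b" "b \<le> n" and bp: "braid_perm \<beta> = transpose a b"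
  shows "\<not> bi_orderable ((braid_group n)\<lparr>carrier := generate (braid_group n) (pure_braids n \<union> {\<beta>})\<rparr>)"
proof (cases "a \<le> n - 2")
  case True
  show ?thesis
  proof (rule core[OF beta chain_valid[of a "b - a - 1"]])
    show "braid_perm \<beta> = transpose (word_perm (chain a (b - a - 1)) a) (word_perm (chain a (b - a - 1)) (a + 1))"
      using chain_perm[of a "b - a - 1"] bp ab by simp
  qed (use ab True n in auto)
next
  case False
  then have a: "a = n - 1" "b = n" using ab by auto
  show ?thesis
  proof (rule core[OF beta, of "[(n-2,True),(n-1,True)]" "n-2"])
    show "braid_perm \<beta> = transpose (word_perm [(n-2,True),(n-1,True)] (n-2)) (word_perm [(n-2,True),(n-1,True)] (n-2+1))"
    proof -
      obtain m where m: "n = 3 + m" using n le_Suc_ex by blast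
      show ?thesis using bp a unfolding m by (simp add: numeral_eq_Suc)
    qed
  qed (use n in auto)
qed

theorem mainTheorem8:
  fixes n :: nat and \<beta> :: "bword set"
  assumes "n \<ge> 3"
    and "\<beta> \<in> carrier (braid_group n)"
    and "is_transposition n (braid_perm \<beta>)"
  shows "\<not> bi_orderable ((braid_group n)\<lparr>carrier := generate (braid_group n) (pure_braids n \<union> {\<beta>})\<rparr>)"
proof -
  obtain i j where ij: "i \<in> {1..n}" "j \<in> {1..n}" "i \<noteq> j" "braid_perm \<beta> = transpose i j"
    using assms(3) unfolding is_transposition_def by blast
  show ?thesis
  proof (cases "i < j")
    case True
    then show ?thesis using core2[OF assms(1,2), of i j] ij by auto
  next
    case False
    then show ?thesis using core2[OF assms(1,2), of j i] ij by (auto simp: transpose_commute)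
  qed
qed

end
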